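(* Let $X$ and $Z$ be real Banach spaces and $Y$ a closed subspace of $Z$ which has property-$(SU)$ in $Z$. Identify $(X\widehat{\otimes}_\pi Y)^*$ with $\mathcal{L}(X,Y^* )$ and $(X\widehat{\otimes}_\pi Z)^*$ with $\mathcal{L}(X,Z^* )$. Then every isometry $S\in\mathcal{L}(X,Y^* )$ has a unique norm-preserving extension to $X\widehat{\otimes}_\pi Z$, i.e. there is exactly one $T\in\mathcal{L}(X,Z^* )$ with $\|T\|=\|S\|$ and $(Tx)|_Y=Sx$ for all $x\in X$.
   Context: $X\widehat{\otimes}_\pi Y$ denotes the completed projective tensor product; its dual is identified with the space $\mathcal{L}(X,Y^* )$ of bounded linear operators via $S(x\otimes y)=(Sx)(y)$. Since $Y$ is an ideal in $Z$ (see below), $X\widehat{\otimes}_\pi Y$ is isometrically a subspace of $X\widehat{\otimes}_\pi Z$. $Y^\perp=\{z^*\in Z^*:z^*|_Y=0\}$. $Y$ has property-$(SU)$ in $Z$ if there is a bounded linear projection $P$ on $Z^*$ with range $Y^\perp$ such that, with $G=(I-P)(Z^* )$, for every $z^*=y^\#+y^\perp$ with $y^\#\in G$, $0\neq y^\perp\in Y^\perp$, one has $\|z^*\|>\|y^\#\|$; equivalently, every $y^*\in Y^*$ has a unique norm-preserving extension to $Z$ and there is a norm-one projection on $Z^*$ with kernel $Y^\perp$ (i.e. $Y$ is an ideal in $Z$). *)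

theory Defs
  imports "HOL-Analysis.Analysis"
begin

definition annihilator :: "'z::real_normed_vector set \<Rightarrow> ('z \<Rightarrow>\<^sub>L real) set" where
  "annihilator Y = {f. \<forall>y\<in>Y. blinfun_apply f y = 0}"

definition property_SU :: "'z::real_normed_vector set \<Rightarrow> bool" where
  "property_SU Y \<longleftrightarrow> (\<exists>P :: ('z \<Rightarrow>\<^sub>L real) \<Rightarrow>\<^sub>L ('z \<Rightarrow>\<^sub>L real).
     (\<forall>f. blinfun_apply P (blinfun_apply P f) = blinfun_apply P f) \<and> range (blinfun_apply P) = annihilator Y \<and>
     (\<forall>g \<in> range (\<lambda>f. f - blinfun_apply P f). \<forall>h \<in> annihilator Y. h \<noteq> 0 \<longrightarrow> norm (g + h) > norm g))"

text \<open>Elements of Y^* are represented by functions 'z => real whose restriction to Y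
  is linear and bounded; only the values on Y matter.\<close>
definition bounded_functional_on :: "'z::real_normed_vector set \<Rightarrow> ('z \<Rightarrow> real) \<Rightarrow> bool" where
  "bounded_functional_on Y f \<longleftrightarrow>
     (\<forall>a\<in>Y. \<forall>b\<in>Y. f (a + b) = f a + f b) \<and> (\<forall>c. \<forall>a\<in>Y. f (c *\<^sub>R a) = c * f a) \<and>
     (\<exists>K. \<forall>y\<in>Y. \<bar>f y\<bar> \<le> K * norm y)"

definition dual_norm_on :: "'z::real_normed_vector set \<Rightarrow> ('z \<Rightarrow> real) \<Rightarrow> real" where
  "dual_norm_on Y f = Sup ((\<lambda>y. \<bar>f y\<bar>) ` {y\<in>Y. norm y \<le> 1})"

definition bounded_op_to_dual_on ::
    "'z::real_normed_vector set \<Rightarrow> ('x::real_normed_vector \<Rightarrow> 'z \<Rightarrow> real) \<Rightarrow> bool" where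
  "bounded_op_to_dual_on Y S \<longleftrightarrow>
     (\<forall>x. bounded_functional_on Y (S x)) \<and>
     (\<forall>x1 x2. \<forall>y\<in>Y. S (x1 + x2) y = S x1 y + S x2 y) \<and>
     (\<forall>c x. \<forall>y\<in>Y. S (c *\<^sub>R x) y = c * S x y) \<and>
     (\<exists>K. \<forall>x. dual_norm_on Y (S x) \<le> K * norm x)"

definition op_norm_to_dual_on ::
    "'z::real_normed_vector set \<Rightarrow> ('x::real_normed_vector \<Rightarrow> 'z \<Rightarrow> real) \<Rightarrow> real" where
  "op_norm_to_dual_on Y S = Sup ((\<lambda>x. dual_norm_on Y (S x)) ` {x. norm x \<le> 1})"

end

theory Submission
  imports Defs
begin


definition hbA :: "'z::real_normed_vector set \<Rightarrow> ('z \<Rightarrow> real) \<Rightarrow> real \<Rightarrow> ('z \<times> real) set set" where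
  "hbA Y f K = {G. (\<forall>x a b. (x,a) \<in> G \<longrightarrow> (x,b) \<in> G \<longrightarrow> a = b) \<and>
     (\<forall>x a y b. (x,a) \<in> G \<longrightarrow> (y,b) \<in> G \<longrightarrow> (x+y, a+b) \<in> G) \<and>
     (\<forall>x a c. (x,a) \<in> G \<longrightarrow> (c *\<^sub>R x, c*a) \<in> G) \<and>
     (0,0) \<in> G \<and> (\<forall>y\<in>Y. (y, f y) \<in> G) \<and> (\<forall>x a. (x,a) \<in> G \<longrightarrow> a \<le> K * norm x)}"

lemma hb_chain:
  assumes "C \<noteq> {}" "subset.chain (hbA Y f K) C"
  shows "\<Union>C \<in> hbA Y f K"
proof -
  have CA: "C \<subseteq> hbA Y f K" and cmp: "\<And>A B. A \<in> C \<Longrightarrow> B \<in> C \<Longrightarrow> A \<subseteq> B \<or> B \<subseteq> A"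
    using assms(2) unfolding subset.chain_def by auto
  have two: "\<exists>G\<in>C. p \<in> G \<and> q \<in> G" if "p \<in> \<Union>C" "q \<in> \<Union>C" for p q
    using that cmp by blast
  obtain G0 where "G0 \<in> C" using assms(1) by blast
  then have G0: "G0 \<in> hbA Y f K" using CA by blast
  show ?thesis unfolding hbA_def
  proof (intro CollectI conjI allI impI ballI)
    fix x a b assume "(x,a) \<in> \<Union>C" "(x,b) \<in> \<Union>C"
    then obtain G where "G \<in> C" "(x,a) \<in> G" "(x,b) \<in> G" using two by blast
    then show "a = b" using CA unfolding hbA_def by blast
  next
    fix x a y b assume "(x,a) \<in> \<Union>C" "(y,b) \<in> \<Union>C"
    then obtain G where "G \<in> C" "(x,a) \<in> G" "(y,b) \<in> G" using two by blast
    then show "(x+y, a+b) \<in> \<Union>C" using CA unfolding hbA_def by blast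
  next
    fix x a c assume "(x,a) \<in> \<Union>C"
    then obtain G where "G \<in> C" "(x,a) \<in> G" by blast
    then show "(c *\<^sub>R x, c*a) \<in> \<Union>C" using CA unfolding hbA_def by blast
  next
    show "(0,0) \<in> \<Union>C" using G0 \<open>G0 \<in> C\<close> unfolding hbA_def by blast
  next
    fix y assume "y \<in> Y" then show "(y, f y) \<in> \<Union>C" using G0 \<open>G0 \<in> C\<close> unfolding hbA_def by blast
  next
    fix x a assume "(x,a) \<in> \<Union>C"
    then obtain G where "G \<in> C" "(x,a) \<in> G" by blast
    then show "a \<le> K * norm x" using CA unfolding hbA_def by blast
  qed
qed

lemma hb_step:
  assumes M: "M \<in> hbA Y f K" and K: "K \<ge> 0" and x0: "x0 \<notin> fst ` M"
  shows "\<exists>G\<in>hbA Y f K. M \<subseteq> G \<and> G \<noteq> M"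
proof -
  have fnc: "\<And>x a b. (x,a) \<in> M \<Longrightarrow> (x,b) \<in> M \<Longrightarrow> a = b"
    and add: "\<And>x a y b. (x,a) \<in> M \<Longrightarrow> (y,b) \<in> M \<Longrightarrow> (x+y, a+b) \<in> M"
    and scl: "\<And>x a c. (x,a) \<in> M \<Longrightarrow> (c *\<^sub>R x, c*a) \<in> M"
    and z: "(0,0) \<in> M" and yy: "\<And>y. y\<in>Y \<Longrightarrow> (y, f y) \<in> M"
    and bd: "\<And>x a. (x,a) \<in> M \<Longrightarrow> a \<le> K * norm x"
    using M unfolding hbA_def by blast+
  define L where "L = (\<lambda>p. snd p - K * norm (fst p - x0)) ` M"
  define c where "c = Sup L"
  have key: "a1 - K * norm (d1 - x0) \<le> K * norm (d2 + x0) - a2"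
    if "(d1,a1) \<in> M" "(d2,a2) \<in> M" for d1 a1 d2 a2
  proof -
    have "a1 + a2 \<le> K * norm (d1 + d2)" using bd[OF add[OF that]] .
    also have "norm (d1 + d2) \<le> norm (d1 - x0) + norm (d2 + x0)"
      using norm_triangle_ineq[of "d1 - x0" "d2 + x0"] by simp
    then have "K * norm (d1 + d2) \<le> K * norm (d1 - x0) + K * norm (d2 + x0)"
      using K by (metis distrib_left mult_left_mono)
    finally show ?thesis by linarith
  qed
  have Lne: "L \<noteq> {}" using z unfolding L_def by blast
  have Lbdd: "bdd_above L" unfolding L_def bdd_above_def
    using key[of _ _ 0 0] z by (intro exI[of _ "K * norm (0 + x0) - 0"]) fastforce
  have c_lo: "a - K * norm (d - x0) \<le> c" if "(d,a) \<in> M" for d a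
    unfolding c_def using that Lbdd by (intro cSup_upper) (auto simp: L_def image_iff intro!: bexI[of _ "(d,a)"])
  have c_hi: "c \<le> K * norm (d + x0) - a" if "(d,a) \<in> M" for d a
    unfolding c_def using that Lne key by (intro cSup_least) (auto simp: L_def)
  define G where "G = {(d + t *\<^sub>R x0, a + t * c) | d a t. (d,a) \<in> M}"
  have sub: "(d2 - d1, a2 - a1) \<in> M" if "(d1,a1) \<in> M" "(d2,a2) \<in> M" for d1 a1 d2 a2
    using add[OF that(2) scl[OF that(1), of "-1"]] by simp
  have G_bd: "a + t * c \<le> K * norm (d + t *\<^sub>R x0)" if "(d,a) \<in> M" for d a t
  proof (cases "t = 0")
    case True then show ?thesis using bd[OF that] by simp
  next
    case False
    show ?thesis
    proof (cases "t > 0")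
      case True
      have "c \<le> K * norm (inverse t *\<^sub>R d + x0) - inverse t * a" using c_hi[OF scl[OF that]] .
      then have "t * c \<le> t * (K * norm (inverse t *\<^sub>R d + x0) - inverse t * a)"
        using True by (simp add: mult_left_mono)
      also have "t * (K * norm (inverse t *\<^sub>R d + x0) - inverse t * a) = K * norm (t *\<^sub>R (inverse t *\<^sub>R d + x0)) - a"
      proof -
        have "norm (t *\<^sub>R (inverse t *\<^sub>R d + x0)) = t * norm (inverse t *\<^sub>R d + x0)"
          using True by (simp add: norm_scaleR)
        then show ?thesis using True by (simp add: right_diff_distrib)
      qed
      also have "t *\<^sub>R (inverse t *\<^sub>R d + x0) = d + t *\<^sub>R x0" using True by (simp add: algebra_simps)
      finally show ?thesis by simp
    next
      case False
      define s where "s = - t"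
      have s: "s > 0" using False \<open>t \<noteq> 0\<close> unfolding s_def by simp
      have "inverse s * a - K * norm (inverse s *\<^sub>R d - x0) \<le> c" using c_lo[OF scl[OF that]] .
      then have "s * (inverse s * a - K * norm (inverse s *\<^sub>R d - x0)) \<le> s * c"
        using s by (simp add: mult_left_mono)
      also have "s * (inverse s * a - K * norm (inverse s *\<^sub>R d - x0)) = a - K * norm (s *\<^sub>R (inverse s *\<^sub>R d - x0))"
      proof -
        have "norm (s *\<^sub>R (inverse s *\<^sub>R d - x0)) = s * norm (inverse s *\<^sub>R d - x0)"
          using s by (simp add: norm_scaleR)
        then show ?thesis using s by (simp add: right_diff_distrib)
      qed
      also have "s *\<^sub>R (inverse s *\<^sub>R d - x0) = d + t *\<^sub>R x0" using s unfolding s_def by (simp add: algebra_simps)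
      finally show ?thesis unfolding s_def by simp
    qed
  qed
  have G_fun: "a1 + t1 * c = a2 + t2 * c"
    if "(d1,a1) \<in> M" "(d2,a2) \<in> M" "d1 + t1 *\<^sub>R x0 = d2 + t2 *\<^sub>R x0" for d1 a1 d2 a2 t1 t2
  proof (cases "t1 = t2")
    case True
    then have "d1 = d2" using that(3) by simp
    then show ?thesis using True fnc that by blast
  next
    case False
    have "(inverse (t1 - t2) *\<^sub>R (d2 - d1), inverse (t1 - t2) * (a2 - a1)) \<in> M"
      using scl[OF sub[OF that(1,2)]] .
    moreover have "inverse (t1 - t2) *\<^sub>R (d2 - d1) = x0"
    proof -
      have "d2 - d1 = (t1 - t2) *\<^sub>R x0" using that(3) by (simp add: algebra_simps)
      then show ?thesis using False by simp
    qed
    ultimately have "x0 \<in> fst ` M" by force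
    then show ?thesis using x0 by blast
  qed
  have "G \<in> hbA Y f K" unfolding hbA_def
  proof (intro CollectI conjI allI impI ballI)
    fix x a b assume "(x,a) \<in> G" "(x,b) \<in> G"
    then show "a = b" unfolding G_def using G_fun by auto
  next
    fix x a y b assume "(x,a) \<in> G" "(y,b) \<in> G"
    then obtain d1 a1 t1 d2 a2 t2 where "(d1,a1) \<in> M" "(d2,a2) \<in> M"
      "x = d1 + t1 *\<^sub>R x0" "a = a1 + t1 * c" "y = d2 + t2 *\<^sub>R x0" "b = a2 + t2 * c"
      unfolding G_def by blast
    moreover have "x + y = (d1 + d2) + (t1 + t2) *\<^sub>R x0" "a + b = (a1 + a2) + (t1 + t2) * c"
      using calculation by (simp_all add: algebra_simps)
    ultimately show "(x+y, a+b) \<in> G" unfolding G_def using add by blast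
  next
    fix x a r assume "(x,a) \<in> G"
    then obtain d1 a1 t1 where "(d1,a1) \<in> M" "x = d1 + t1 *\<^sub>R x0" "a = a1 + t1 * c"
      unfolding G_def by blast
    moreover have "r *\<^sub>R x = r *\<^sub>R d1 + (r * t1) *\<^sub>R x0" "r * a = r * a1 + (r * t1) * c"
      using calculation by (simp_all add: algebra_simps)
    ultimately show "(r *\<^sub>R x, r*a) \<in> G" unfolding G_def using scl by blast
  next
    show "(0,0) \<in> G" unfolding G_def using z by force
  next
    fix y assume "y \<in> Y" then show "(y, f y) \<in> G" unfolding G_def using yy by force
  next
    fix x a assume "(x,a) \<in> G" then show "a \<le> K * norm x" unfolding G_def using G_bd by auto
  qed
  moreover have "M \<subseteq> G"
  proof
    fix p assume "p \<in> M"
    then show "p \<in> G" unfolding G_def by (cases p) force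
  qed
  moreover have "(x0, c) \<in> G" unfolding G_def using z by force
  then have "G \<noteq> M" using x0 by force
  ultimately show ?thesis by blast
qed


lemma hb_ext:
  fixes Y :: "'z::real_normed_vector set" and f :: "'z \<Rightarrow> real"
  assumes "subspace Y" and fadd: "\<forall>a\<in>Y. \<forall>b\<in>Y. f (a+b) = f a + f b"
    and fscl: "\<forall>c. \<forall>a\<in>Y. f (c *\<^sub>R a) = c * f a"
    and fbd: "\<forall>y\<in>Y. \<bar>f y\<bar> \<le> K * norm y" and K: "K \<ge> 0"
  shows "\<exists>F::'z \<Rightarrow>\<^sub>L real. (\<forall>y\<in>Y. blinfun_apply F y = f y) \<and> norm F \<le> K"
proof -
  let ?A = "hbA Y f K"
  define G0 where "G0 = {(y, f y) | y. y \<in> Y}"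
  have Y0: "0 \<in> Y" using assms(1) by (simp add: subspace_0)
  have f0: "f 0 = 0" using fscl Y0 by (metis mult_zero_left scale_zero_left)
  have "G0 \<in> ?A" unfolding hbA_def G0_def
    using assms(1) fadd fscl fbd f0 Y0
    by (auto simp: subspace_add subspace_scale abs_le_iff)
  then have "?A \<noteq> {}" by blast
  from subset_Zorn_nonempty[OF this hb_chain]
  obtain M where M: "M \<in> ?A" and max: "\<forall>X\<in>?A. M \<subseteq> X \<longrightarrow> X = M" by blast
  have dom: "\<forall>x. \<exists>a. (x,a) \<in> M"
  proof (rule ccontr)
    assume "\<not> (\<forall>x. \<exists>a. (x,a) \<in> M)"
    then obtain x0 where "x0 \<notin> fst ` M" by force
    from hb_step[OF M K this] max show False by blast
  qed
  then obtain F where F: "\<And>x. (x, F x) \<in> M" by metis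
  have fnc: "\<And>x a b. (x,a) \<in> M \<Longrightarrow> (x,b) \<in> M \<Longrightarrow> a = b"
    and add: "\<And>x a y b. (x,a) \<in> M \<Longrightarrow> (y,b) \<in> M \<Longrightarrow> (x+y, a+b) \<in> M"
    and scl: "\<And>x a c. (x,a) \<in> M \<Longrightarrow> (c *\<^sub>R x, c*a) \<in> M"
    and yy: "\<And>y. y\<in>Y \<Longrightarrow> (y, f y) \<in> M"
    and bd: "\<And>x a. (x,a) \<in> M \<Longrightarrow> a \<le> K * norm x"
    using M unfolding hbA_def by blast+
  have Fadd: "F (x + y) = F x + F y" for x y using fnc[OF F add[OF F F]] .
  have Fscl: "F (c *\<^sub>R x) = c * F x" for c x using fnc[OF F scl[OF F]] .
  have Fle: "F x \<le> K * norm x" for x using bd[OF F] .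
  have Fabs: "\<bar>F x\<bar> \<le> K * norm x" for x
    using Fle[of x] Fle[of "-x"] Fscl[of "-1" x] by (simp add: abs_le_iff)
  have lin: "linear F" by (rule linearI) (simp_all add: Fadd Fscl)
  have bl: "bounded_linear F"
    using lin Fabs by (intro bounded_linear_intro[of _ K]) (auto simp: linear_add linear_scale mult.commute)
  show ?thesis
  proof (intro exI conjI)
    show "\<forall>y\<in>Y. blinfun_apply (Blinfun F) y = f y"
      using bounded_linear_Blinfun_apply[OF bl] fnc[OF F yy] by auto
    show "norm (Blinfun F) \<le> K"
      using K Fabs by (intro norm_blinfun_bound) (auto simp: bounded_linear_Blinfun_apply[OF bl])
  qed
qed



lemma dn_le:
  assumes "0 \<in> Y"
  shows "dual_norm_on Y (blinfun_apply w) \<le> norm w"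
  unfolding dual_norm_on_def
proof (rule cSup_least)
  show "(\<lambda>y. \<bar>blinfun_apply w y\<bar>) ` {y \<in> Y. norm y \<le> 1} \<noteq> {}" using assms by auto
next
  fix r assume "r \<in> (\<lambda>y. \<bar>blinfun_apply w y\<bar>) ` {y \<in> Y. norm y \<le> 1}"
  then obtain y where "norm y \<le> 1" "r = \<bar>blinfun_apply w y\<bar>" by auto
  moreover have "\<bar>blinfun_apply w y\<bar> \<le> norm w * norm y" using norm_blinfun[of w y] by simp
  moreover have "norm w * norm y \<le> norm w" using \<open>norm y \<le> 1\<close> by (simp add: mult_left_le)
  ultimately show "r \<le> norm w" by linarith
qed

lemma dn_cong:
  assumes "\<forall>y\<in>Y. g y = h y"
  shows "dual_norm_on Y g = dual_norm_on Y h"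
  unfolding dual_norm_on_def using assms by (intro arg_cong[where f=Sup] image_cong) auto

lemma dn_bound:
  assumes "subspace Y" "bounded_functional_on Y g" "y \<in> Y"
  shows "\<bar>g y\<bar> \<le> dual_norm_on Y g * norm y"
proof -
  obtain K where K: "\<forall>y\<in>Y. \<bar>g y\<bar> \<le> K * norm y"
    and sc: "\<forall>c. \<forall>a\<in>Y. g (c *\<^sub>R a) = c * g a"
    using assms(2) unfolding bounded_functional_on_def by blast
  have bdd: "bdd_above ((\<lambda>y. \<bar>g y\<bar>) ` {y \<in> Y. norm y \<le> 1})"
  proof (rule bdd_aboveI2)
    fix y assume "y \<in> {y \<in> Y. norm y \<le> 1}"
    then have "\<bar>g y\<bar> \<le> K * norm y" "norm y \<le> 1" using K by auto
    moreover have "K * norm y \<le> \<bar>K\<bar> * norm y" by (simp add: mult_right_mono)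
    moreover have "\<bar>K\<bar> * norm y \<le> \<bar>K\<bar>" using \<open>norm y \<le> 1\<close> by (simp add: mult_left_le)
    ultimately show "\<bar>g y\<bar> \<le> \<bar>K\<bar>" by linarith
  qed
  show ?thesis
  proof (cases "y = 0")
    case True
    then have "g y = 0" using sc assms(3) by (metis mult_zero_left scale_zero_left)
    moreover have "0 \<le> dual_norm_on Y g"
      unfolding dual_norm_on_def using assms(3) True bdd \<open>g y = 0\<close>
      by (intro cSup_upper2[of 0 _ 0]) (auto intro!: image_eqI[of _ _ 0])
    ultimately show ?thesis by simp
  next
    case False
    define u where "u = inverse (norm y) *\<^sub>R y"
    have u: "u \<in> Y" "norm u = 1" using False assms(1,3) unfolding u_def by (auto simp: subspace_scale)
    have "\<bar>g u\<bar> \<le> dual_norm_on Y g"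
      unfolding dual_norm_on_def using u bdd by (intro cSup_upper) auto
    moreover have "g y = norm y * g u"
    proof -
      have "y = norm y *\<^sub>R u" using False unfolding u_def by simp
      then show ?thesis using sc u(1) by metis
    qed
    ultimately show ?thesis using False
      by (simp add: abs_mult mult.commute mult_left_mono)
  qed
qed


theorem theorem3p8:
  fixes Y :: "'z::banach set" and S :: "'x::banach \<Rightarrow> 'z \<Rightarrow> real"
  assumes "subspace Y" and "closed Y"
    and "property_SU Y"
    and "bounded_op_to_dual_on Y S"
    and "\<forall>x. dual_norm_on Y (S x) = norm x"
  shows "\<exists>!T :: 'x \<Rightarrow>\<^sub>L ('z \<Rightarrow>\<^sub>L real).
           norm T = op_norm_to_dual_on Y S \<and> (\<forall>x. \<forall>y\<in>Y. blinfun_apply (blinfun_apply T x) y = S x y)"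
proof -
  have Y0: "0 \<in> Y" using assms(1) by (simp add: subspace_0)
  obtain P :: "('z \<Rightarrow>\<^sub>L real) \<Rightarrow>\<^sub>L ('z \<Rightarrow>\<^sub>L real)" where
    Pid0: "\<forall>f. blinfun_apply P (blinfun_apply P f) = blinfun_apply P f"
    and Pr: "range (blinfun_apply P) = annihilator Y"
    and SU: "\<forall>g \<in> range (\<lambda>f. f - blinfun_apply P f). \<forall>h \<in> annihilator Y. h \<noteq> 0 \<longrightarrow> norm (g + h) > norm g"
    using assms(3) unfolding property_SU_def by (elim exE conjE) blast
  have Pid: "\<And>f. blinfun_apply P (blinfun_apply P f) = blinfun_apply P f" using Pid0 by blast
  define Q where "Q = id_blinfun - P"
  have Qapp: "blinfun_apply Q w = w - blinfun_apply P w" for w unfolding Q_def by (simp add: blinfun.diff_left)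
  have Pann: "blinfun_apply P w \<in> annihilator Y" for w using Pr by blast
  have QP: "blinfun_apply Q h = 0" if "h \<in> annihilator Y" for h
  proof -
    have "h \<in> range (blinfun_apply P)" using that Pr by simp
    then obtain w where "h = blinfun_apply P w" by (rule rangeE)
    then show ?thesis using Pid by (simp add: Qapp)
  qed
  have Qres: "blinfun_apply (blinfun_apply Q w) y = blinfun_apply w y" if "y \<in> Y" for w y
    using Pann[of w] that by (simp add: Qapp annihilator_def blinfun.diff_left)
  have Qle: "norm (blinfun_apply Q w) \<le> norm w" for w
  proof (cases "blinfun_apply P w = 0")
    case True then show ?thesis by (simp add: Qapp)
  next
    case False
    have "norm (blinfun_apply Q w + blinfun_apply P w) > norm (blinfun_apply Q w)"
      using SU Pann[of w] False unfolding Qapp by blast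
    then show ?thesis by (simp add: Qapp)
  qed
  have fix1: "blinfun_apply Q z = z" if "norm z \<le> dual_norm_on Y (blinfun_apply z)" for z
  proof (rule ccontr)
    assume ne: "blinfun_apply Q z \<noteq> z"
    then have "blinfun_apply P z \<noteq> 0" by (simp add: Qapp)
    then have "norm (blinfun_apply Q z + blinfun_apply P z) > norm (blinfun_apply Q z)"
      using SU Pann[of z] unfolding Qapp by blast
    then have "norm z > norm (blinfun_apply Q z)" by (simp add: Qapp)
    moreover have "dual_norm_on Y (blinfun_apply (blinfun_apply Q z)) \<le> norm (blinfun_apply Q z)"
      using dn_le[OF Y0] .
    moreover have "dual_norm_on Y (blinfun_apply (blinfun_apply Q z)) = dual_norm_on Y (blinfun_apply z)"
      using Qres by (intro dn_cong) auto
    ultimately show False using that by linarith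
  qed
  have uniq: "z1 = z2" if "\<forall>y\<in>Y. blinfun_apply z1 y = blinfun_apply z2 y"
    "norm z1 \<le> dual_norm_on Y (blinfun_apply z1)" "norm z2 \<le> dual_norm_on Y (blinfun_apply z2)" for z1 z2
  proof -
    have "z1 - z2 \<in> annihilator Y" using that(1) by (simp add: annihilator_def blinfun.diff_left)
    then have "blinfun_apply Q (z1 - z2) = 0" by (rule QP)
    then have "blinfun_apply Q z1 = blinfun_apply Q z2" by (simp add: blinfun.diff_right)
    then show ?thesis using fix1[OF that(2)] fix1[OF that(3)] by simp
  qed
  have Sb: "\<forall>x. bounded_functional_on Y (S x)"
    and Sadd: "\<forall>x1 x2. \<forall>y\<in>Y. S (x1 + x2) y = S x1 y + S x2 y"
    and Sscl: "\<forall>c x. \<forall>y\<in>Y. S (c *\<^sub>R x) y = c * S x y"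
    using assms(4) unfolding bounded_op_to_dual_on_def by blast+
  have ex: "\<forall>x. \<exists>F::'z \<Rightarrow>\<^sub>L real. (\<forall>y\<in>Y. blinfun_apply F y = S x y) \<and> norm F \<le> norm x"
  proof
    fix x
    show "\<exists>F::'z \<Rightarrow>\<^sub>L real. (\<forall>y\<in>Y. blinfun_apply F y = S x y) \<and> norm F \<le> norm x"
    proof (rule hb_ext[OF assms(1)])
      show "\<forall>a\<in>Y. \<forall>b\<in>Y. S x (a + b) = S x a + S x b" "\<forall>c. \<forall>a\<in>Y. S x (c *\<^sub>R a) = c * S x a"
        using Sb unfolding bounded_functional_on_def by blast+
      show "\<forall>y\<in>Y. \<bar>S x y\<bar> \<le> norm x * norm y"
      proof
        fix y assume "y \<in> Y"
        then show "\<bar>S x y\<bar> \<le> norm x * norm y"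
          using dn_bound[OF assms(1) Sb[rule_format, of x]] assms(5) by simp
      qed
    qed simp
  qed
  obtain E where E0: "\<forall>x. (\<forall>y\<in>Y. blinfun_apply (E x) y = S x y) \<and> norm (E x) \<le> norm x"
    using choice[OF ex] by blast
  have E: "\<And>x y. y \<in> Y \<Longrightarrow> blinfun_apply (E x) y = S x y" and En: "\<And>x. norm (E x) \<le> norm x"
    using E0 by auto
  define T0 where "T0 x = blinfun_apply Q (E x)" for x
  have T0res: "blinfun_apply (T0 x) y = S x y" if "y \<in> Y" for x y
    using that by (simp add: T0_def Qres E)
  have T0n: "norm (T0 x) \<le> norm x" for x using Qle[of "E x"] En[of x] unfolding T0_def by linarith
  have T0add: "T0 (x1 + x2) = T0 x1 + T0 x2" for x1 x2
  proof -
    have "E (x1 + x2) - E x1 - E x2 \<in> annihilator Y"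
      using Sadd by (simp add: annihilator_def blinfun.diff_left E)
    then have "blinfun_apply Q (E (x1 + x2) - E x1 - E x2) = 0" by (rule QP)
    then show ?thesis unfolding T0_def by (simp add: blinfun.diff_right blinfun.add_right algebra_simps)
  qed
  have T0scl: "T0 (c *\<^sub>R x) = c *\<^sub>R T0 x" for c x
  proof -
    have "E (c *\<^sub>R x) - c *\<^sub>R E x \<in> annihilator Y"
      using Sscl by (simp add: annihilator_def blinfun.diff_left blinfun.scaleR_left E)
    then have "blinfun_apply Q (E (c *\<^sub>R x) - c *\<^sub>R E x) = 0" by (rule QP)
    then show ?thesis unfolding T0_def by (simp add: blinfun.diff_right blinfun.scaleR_right)
  qed
  have bl: "bounded_linear T0"
    by (rule bounded_linear_intro[of _ 1]) (simp_all add: T0add T0scl T0n)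
  define T where "T = Blinfun T0"
  have Tapp: "blinfun_apply T x = T0 x" for x unfolding T_def using bounded_linear_Blinfun_apply[OF bl] by simp
  define N where "N = op_norm_to_dual_on Y S"
  have N: "N = Sup (norm ` {x::'x. norm x \<le> 1})"
    unfolding N_def op_norm_to_dual_on_def using assms(5) by simp
  have dnT: "dual_norm_on Y (blinfun_apply (blinfun_apply T' x)) = norm x"
    if "\<forall>x. \<forall>y\<in>Y. blinfun_apply (blinfun_apply T' x) y = S x y" for T' :: "'x \<Rightarrow>\<^sub>L ('z \<Rightarrow>\<^sub>L real)" and x
    using dn_cong[of Y "blinfun_apply (blinfun_apply T' x)" "S x"] that assms(5) by simp
  have case1: "N = 1" if "x0 \<noteq> 0" for x0 :: 'x
  proof -
    have "norm (inverse (norm x0) *\<^sub>R x0) = 1" using that by simp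
    then show ?thesis unfolding N
      by (intro cSup_eq_maximum) (auto intro!: image_eqI[of _ _ "inverse (norm x0) *\<^sub>R x0"])
  qed
  have case0: "N = 0" if "\<forall>x::'x. x = 0"
  proof -
    have "{x::'x. norm x \<le> 1} = {0}" using that by auto
    then show ?thesis unfolding N by simp
  qed
  have bndT: "norm (blinfun_apply T' x) \<le> norm x" if "norm T' = N" for T' :: "'x \<Rightarrow>\<^sub>L ('z \<Rightarrow>\<^sub>L real)" and x
  proof (cases "\<forall>x::'x. x = 0")
    case True
    then have "x = 0" by blast
    then show ?thesis by simp
  next
    case False
    then obtain x0 :: 'x where "x0 \<noteq> 0" by blast
    then have "norm T' = 1" using case1 that by simp
    then show ?thesis using norm_blinfun[of T' x] by simp
  qed
  show ?thesis unfolding N_def[symmetric]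
  proof (rule ex1I[of _ T])
    show "norm T = N \<and> (\<forall>x. \<forall>y\<in>Y. blinfun_apply (blinfun_apply T x) y = S x y)"
    proof
      show "\<forall>x. \<forall>y\<in>Y. blinfun_apply (blinfun_apply T x) y = S x y" by (simp add: Tapp T0res)
      show "norm T = N"
      proof (cases "\<forall>x::'x. x = 0")
        case True
        have T0z: "\<forall>x. blinfun_apply T x = 0"
        proof
          fix x :: 'x
          have "x = 0" using True by blast
          then show "blinfun_apply T x = 0" by simp
        qed
        have "norm T \<le> 0" by (rule norm_blinfun_bound) (simp_all add: T0z)
        then show ?thesis using case0[OF True] by (simp add: antisym)
      next
        case False
        then obtain x0 :: 'x where x0: "x0 \<noteq> 0" by blast
        define u where "u = inverse (norm x0) *\<^sub>R x0"
        have u: "norm u = 1" using x0 unfolding u_def by simp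
        have "norm T \<le> 1" by (rule norm_blinfun_bound) (simp_all add: Tapp T0n)
        moreover have "norm (blinfun_apply T u) = 1"
        proof -
          have "norm (blinfun_apply T u) \<ge> dual_norm_on Y (blinfun_apply (blinfun_apply T u))"
            using dn_le[OF Y0] .
          moreover have "dual_norm_on Y (blinfun_apply (blinfun_apply T u)) = 1"
            using dnT[of T u] u by (simp add: Tapp T0res)
          ultimately show ?thesis using T0n[of u] u by (simp add: Tapp)
        qed
        moreover have "norm (blinfun_apply T u) \<le> norm T * norm u" by (rule norm_blinfun)
        ultimately show ?thesis using case1[OF x0] u by simp
      qed
    qed
  next
    fix T' assume T': "norm T' = N \<and> (\<forall>x. \<forall>y\<in>Y. blinfun_apply (blinfun_apply T' x) y = S x y)"
    have Tc: "\<forall>x. \<forall>y\<in>Y. blinfun_apply (blinfun_apply T x) y = S x y" by (simp add: Tapp T0res)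
    show "T' = T"
    proof (rule blinfun_eqI)
      fix x
      show "blinfun_apply T' x = blinfun_apply T x"
      proof (rule uniq)
        show "\<forall>y\<in>Y. blinfun_apply (blinfun_apply T' x) y = blinfun_apply (blinfun_apply T x) y"
          using T' Tc by simp
        show "norm (blinfun_apply T' x) \<le> dual_norm_on Y (blinfun_apply (blinfun_apply T' x))"
          using dnT[of T' x] T' bndT[of T' x] by simp
        show "norm (blinfun_apply T x) \<le> dual_norm_on Y (blinfun_apply (blinfun_apply T x))"
          using dnT[OF Tc, of x] T0n[of x] by (simp add: Tapp)
      qed
    qed
  qed
qed

end
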